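(* Let $L\ge 6$ be even and let $0\le\ell_1,\ell_2\le L$ be integers. The perimeter of the rhombus $\mathcal{R}_{\ell_1,\ell_2}$ (with any reference site) on the $L\times L$ toric grid graph satisfies $$P(\mathcal{R}_{\ell_1,\ell_2})=4\times\begin{cases}\ell_1+\ell_2+1 & \text{if } \min\{\ell_1,\ell_2\}<L/2 \text{ and } \max\{\ell_1,\ell_2\}<L,\\ 2L-(\ell_1+\ell_2+1) & \text{if } \min\{\ell_1,\ell_2\}\ge L/2 \text{ and } \max\{\ell_1,\ell_2\}<L,\\ L & \text{if } \min\{\ell_1,\ell_2\}<L/2 \text{ and } \max\{\ell_1,\ell_2\}=L,\\ 0 & \text{if } \min\{\ell_1,\ell_2\}\ge L/2 \text{ and } \max\{\ell_1,\ell_2\}=L.\end{cases}$$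
   Context: $L\ge 6$ is even and $\Lambda=(V,E)$ is the $L\times L$ toric grid graph: $V=\{0,\dots,L-1\}^2$, two sites adjacent iff they differ by $\pm1$ mod $L$ in exactly one coordinate; coordinates are taken mod $L$. Sites are even/odd according to the parity of the coordinate sum; $V_{\mathrm{e}},V_{\mathrm{o}}$ denote even/odd sites. For $S\subseteq V$, $\partial^+S$ is the set of sites outside $S$ adjacent to $S$, and $\nabla S$ is the set of edges joining a site of $S$ to a site of $\partial^+ S$; the perimeter of $S$ is $P(S)=|\nabla S|$. Rhombi: for $\eta=(\eta_1,\eta_2)\in V_{\mathrm{o}}$ and positive $\ell_1,\ell_2\le L$, $\mathcal{R}_{\ell_1,\ell_2}(\eta)=S\cup\partial^+S$ with $S=\{(\eta_1+k+j,\eta_2+k-j):0\le k\le\ell_1-1,\ 0\le j\le \ell_2-1\}$. Degenerate rhombi (when $\ell_1\ell_2=0$) have a reference site $\eta\in V_{\mathrm{e}}$ and are sets of even sites: $\mathcal{R}_{0,\ell_2}(\eta)=\{(\eta_1+j,\eta_2-j):0\le j\le \ell_2\}$ for $\ell_2\neq0$, $\mathcal{R}_{\ell_1,0}(\eta)=\{(\eta_1+k,\eta_2+k):0\le k\le\ell_1\}$ for $\ell_1\ne0$, and $\mathcal{R}_{0,0}(\eta)=\{\eta\}$. *)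

theory Defs
  imports Main
begin

type_synonym site = "int \<times> int"

definition sites :: "nat \<Rightarrow> site set" where
  "sites L = {0..<int L} \<times> {0..<int L}"

definition wrap :: "nat \<Rightarrow> site \<Rightarrow> site" where
  "wrap L p = (fst p mod int L, snd p mod int L)"

definition adj :: "nat \<Rightarrow> site \<Rightarrow> site \<Rightarrow> bool" where
  "adj L x y \<longleftrightarrow> x \<in> sites L \<and> y \<in> sites L \<and>
     ((fst x = fst y \<and> ((snd x - snd y) mod int L = 1 \<or> (snd y - snd x) mod int L = 1)) \<or>
      (snd x = snd y \<and> ((fst x - fst y) mod int L = 1 \<or> (fst y - fst x) mod int L = 1)))"

definition even_site :: "site \<Rightarrow> bool" where
  "even_site p \<longleftrightarrow> even (fst p + snd p)"

definition odd_site :: "site \<Rightarrow> bool" where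
  "odd_site p \<longleftrightarrow> odd (fst p + snd p)"

definition obdry :: "nat \<Rightarrow> site set \<Rightarrow> site set" where
  "obdry L S = {y \<in> sites L. y \<notin> S \<and> (\<exists>x\<in>S. adj L x y)}"

definition edge_bdry :: "nat \<Rightarrow> site set \<Rightarrow> (site \<times> site) set" where
  "edge_bdry L S = {(x, y). x \<in> S \<and> y \<in> obdry L S \<and> adj L x y}"

definition perimeter :: "nat \<Rightarrow> site set \<Rightarrow> nat" where
  "perimeter L S = card (edge_bdry L S)"

definition rhombus :: "nat \<Rightarrow> nat \<Rightarrow> nat \<Rightarrow> site \<Rightarrow> site set" where
  "rhombus L l1 l2 \<eta> =
    (if l1 = 0 \<and> l2 = 0 then {wrap L \<eta>}
     else if l1 = 0 then {wrap L (fst \<eta> + int j, snd \<eta> - int j) | j. j \<le> l2}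
     else if l2 = 0 then {wrap L (fst \<eta> + int k, snd \<eta> + int k) | k. k \<le> l1}
     else (let S = {wrap L (fst \<eta> + int k + int j, snd \<eta> + int k - int j) | k j. k < l1 \<and> j < l2}
           in S \<union> obdry L S))"

end

theory Submission
  imports Defs
begin

definition nb :: "nat \<Rightarrow> site \<Rightarrow> site set" where
  "nb L x = {wrap L (fst x + 1, snd x), wrap L (fst x - 1, snd x),
             wrap L (fst x, snd x + 1), wrap L (fst x, snd x - 1)}"

lemma mod_small_range:
  fixes x L :: int
  assumes "- L \<le> x" "x < L"
  shows "x mod L = (if x < 0 then x + L else x)"
proof (cases "x < 0")
  case True
  have "x mod L = (x + L) mod L" by simp
  also have "\<dots> = x + L" using assms True by (intro mod_pos_pos_trivial) auto
  finally show ?thesis using True by simp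
next
  case False
  then show ?thesis using assms by (simp add: mod_pos_pos_trivial)
qed

lemma mod_one_iff:
  fixes a c L :: int
  assumes "0 \<le> a" "a < L" "0 \<le> c" "c < L" "L \<ge> 3"
  shows "(c - a) mod L = 1 \<longleftrightarrow> c = (a + 1) mod L"
proof -
  have e1: "(c - a) mod L = (if c - a < 0 then c - a + L else c - a)"
    using assms by (intro mod_small_range) auto
  have e2: "(a + 1) mod L = (if a + 1 < L then a + 1 else 0)"
  proof (cases "a + 1 < L")
    case True then show ?thesis using assms by (simp add: mod_pos_pos_trivial)
  next
    case False then have "a + 1 = L" using assms by simp
    then show ?thesis by simp
  qed
  show ?thesis unfolding e1 e2 using assms by auto
qed

lemma mod_one_iff':
  fixes a c L :: int
  assumes "0 \<le> a" "a < L" "0 \<le> c" "c < L" "L \<ge> 3"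
  shows "(a - c) mod L = 1 \<longleftrightarrow> c = (a - 1) mod L"
proof -
  have e1: "(a - c) mod L = (if a - c < 0 then a - c + L else a - c)"
    using assms by (intro mod_small_range) auto
  have e2: "(a - 1) mod L = (if 0 \<le> a - 1 then a - 1 else L - 1)"
    using assms by (subst mod_small_range) auto
  show ?thesis unfolding e1 e2 using assms by auto
qed

lemma wrap_sites: "L > 0 \<Longrightarrow> wrap L p \<in> sites L"
  by (simp add: wrap_def sites_def)

lemma sites_mod: "x \<in> sites L \<Longrightarrow> fst x mod int L = fst x \<and> snd x mod int L = snd x"
  by (auto simp: sites_def)

lemma adj_nb:
  assumes "x \<in> sites L" "L \<ge> 3"
  shows "adj L x y \<longleftrightarrow> y \<in> nb L x"
proof -
  obtain a b where x: "x = (a, b)" by (cases x)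
  have a: "0 \<le> a" "a < int L" and b: "0 \<le> b" "b < int L" using assms(1) x by (auto simp: sites_def)
  have L3: "int L \<ge> 3" using assms by simp
  show ?thesis
  proof
    assume "adj L x y"
    then obtain c d where y: "y = (c, d)" and c: "0 \<le> c" "c < int L" and d: "0 \<le> d" "d < int L"
      and h: "(a = c \<and> ((b - d) mod int L = 1 \<or> (d - b) mod int L = 1)) \<or>
         (b = d \<and> ((a - c) mod int L = 1 \<or> (c - a) mod int L = 1))"
      unfolding adj_def x by (cases y) (auto simp: sites_def)
    have aa: "a mod int L = a" "b mod int L = b" using a b by auto
    from h show "y \<in> nb L x"
      using mod_one_iff[OF a c L3] mod_one_iff'[OF a c L3] mod_one_iff[OF b d L3] mod_one_iff'[OF b d L3]
      unfolding nb_def x y wrap_def by (auto simp: aa)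
  next
    assume "y \<in> nb L x"
    then have "y = ((a+1) mod int L, b) \<or> y = ((a-1) mod int L, b) \<or> y = (a, (b+1) mod int L) \<or> y = (a, (b-1) mod int L)"
      unfolding nb_def x wrap_def using a b by auto
    moreover have "y \<in> sites L" using \<open>y \<in> nb L x\<close> assms unfolding nb_def by (auto intro: wrap_sites)
    ultimately show "adj L x y"
      unfolding adj_def x using assms(1) x
      using mod_one_iff[OF a _ _ L3] mod_one_iff'[OF a _ _ L3] mod_one_iff[OF b _ _ L3] mod_one_iff'[OF b _ _ L3]
      by (auto simp: sites_def)
  qed
qed

lemma wrap_par:
  assumes "even L"
  shows "even_site (wrap L p) \<longleftrightarrow> even_site p"
proof -
  obtain a b where p: "p = (a, b)" by (cases p)
  have "a mod int L + b mod int L = a + b - int L * (a div int L + b div int L)"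
    by (simp add: algebra_simps minus_div_mult_eq_mod[symmetric])
  moreover have "even (int L * (a div int L + b div int L))" using assms by simp
  ultimately show ?thesis unfolding even_site_def wrap_def p fst_conv snd_conv
    by (metis (no_types, lifting) even_add even_diff)
qed

lemma nb_sites: "L > 0 \<Longrightarrow> nb L x \<subseteq> sites L"
  unfolding nb_def by (auto intro: wrap_sites)

lemma nb_par:
  assumes "even L" "y \<in> nb L x"
  shows "even_site y \<longleftrightarrow> \<not> even_site x"
proof -
  obtain a b where x: "x = (a, b)" by (cases x)
  have "y = wrap L (a+1, b) \<or> y = wrap L (a-1, b) \<or> y = wrap L (a, b+1) \<or> y = wrap L (a, b-1)"
    using assms(2) unfolding nb_def x by auto
  then show ?thesis unfolding x
    by (elim disjE; hypsubst; simp only: wrap_par[OF assms(1)]; simp add: even_site_def; blast)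
qed

lemma adj_sym: "adj L x y \<longleftrightarrow> adj L y x"
  unfolding adj_def by auto

lemma nb_sym:
  assumes "x \<in> sites L" "L \<ge> 3" "y \<in> nb L x"
  shows "x \<in> nb L y"
proof -
  have "L > 0" using assms(2) by simp
  then have "y \<in> sites L" using nb_sites[of L x] assms(3) by blast
  then show ?thesis using assms adj_nb[of x L y] adj_nb[of y L x] adj_sym[of L x y] by blast
qed

lemma card_nb:
  assumes "x \<in> sites L" "L \<ge> 3"
  shows "card (nb L x) = 4"
proof -
  obtain a b where x: "x = (a, b)" by (cases x)
  have am: "a mod int L = a" "b mod int L = b" using assms x by (auto simp: sites_def)
  have L3: "int L \<ge> 3" using assms by simp
  have nd: "\<not> int L dvd 1" "\<not> int L dvd 2" "\<not> int L dvd -1" using L3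
    by (auto dest: zdvd_imp_le)
  have d1: "(a+1) mod int L \<noteq> (a-1) mod int L"
    using nd by (simp add: mod_eq_dvd_iff)
  have d20: "(a+1) mod int L \<noteq> a mod int L" "(a-1) mod int L \<noteq> a mod int L"
    using nd by (simp_all add: mod_eq_dvd_iff)
  have d2: "(a+1) mod int L \<noteq> a" "(a-1) mod int L \<noteq> a"
    using d20 by (simp_all add: am)
  have d3: "(b+1) mod int L \<noteq> (b-1) mod int L"
    using nd by (simp add: mod_eq_dvd_iff)
  have d40: "(b+1) mod int L \<noteq> b mod int L" "(b-1) mod int L \<noteq> b mod int L"
    using nd by (simp_all add: mod_eq_dvd_iff)
  have d4: "(b+1) mod int L \<noteq> b" "(b-1) mod int L \<noteq> b"
    using d40 by (simp_all add: am)
  let ?p1 = "((a+1) mod int L, b)" and ?p2 = "((a-1) mod int L, b)"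
  and ?p3 = "(a, (b+1) mod int L)" and ?p4 = "(a, (b-1) mod int L)"
  have n1: "?p1 \<notin> {?p2, ?p3, ?p4}" using d1 d2 by auto
  have n2: "?p2 \<notin> {?p3, ?p4}" using d2 by auto
  have n3: "?p3 \<notin> {?p4}" using d3 by auto
  have c3: "card {?p3, ?p4} = 2" using card_insert_disjoint[OF _ n3] by simp
  have c2: "card {?p2, ?p3, ?p4} = 3" using card_insert_disjoint[OF _ n2] c3 by simp
  have "card {?p1, ?p2, ?p3, ?p4} = 4" using card_insert_disjoint[OF _ n1] c2 by simp
  moreover have "nb L x = {?p1, ?p2, ?p3, ?p4}" unfolding nb_def x wrap_def using am by simp
  ultimately show ?thesis by simp
qed

lemma finite_sites: "finite (sites L)"
  unfolding sites_def by simp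

lemma perim_closure:
  assumes L: "even L" "L \<ge> 3" and S: "S \<subseteq> sites L" and par: "\<forall>x\<in>S. even_site x = p"
  shows "perimeter L (S \<union> obdry L S) + 4 * card S = 4 * card (obdry L S)"
proof -
  define T where "T = obdry L S"
  have L0: "L > 0" using L by simp
  have fS: "finite S" using S finite_sites finite_subset by blast
  have nbS: "y \<notin> S" if "x \<in> S" "y \<in> nb L x" for x y
    using nb_par[OF L(1) that(2)] par that by auto
  have Teq: "T = (\<Union>x\<in>S. nb L x)"
  proof
    show "T \<subseteq> (\<Union>x\<in>S. nb L x)"
    proof
      fix y assume "y \<in> T"
      then obtain x where "x \<in> S" "adj L x y" unfolding T_def obdry_def by auto
      then show "y \<in> (\<Union>x\<in>S. nb L x)" using adj_nb[of x L y] S L by auto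
    qed
  next
    show "(\<Union>x\<in>S. nb L x) \<subseteq> T"
    proof
      fix y assume "y \<in> (\<Union>x\<in>S. nb L x)"
      then obtain x where x: "x \<in> S" "y \<in> nb L x" by auto
      then have "adj L x y" using adj_nb[of x L y] S L by auto
      moreover have "y \<in> sites L" using x nb_sites[OF L0] by blast
      ultimately show "y \<in> T" unfolding T_def obdry_def using x nbS by auto
    qed
  qed
  have Tpar: "even_site y = (\<not> p)" if yT: "y \<in> T" for y
  proof -
    obtain x where "x \<in> S" "y \<in> nb L x" using yT Teq by auto
    then show ?thesis using nb_par[OF L(1), of y x] par by auto
  qed
  have Tsites: "T \<subseteq> sites L" using Teq nb_sites[OF L0] by auto
  have fT: "finite T" using Tsites finite_sites finite_subset by blast
  have E: "edge_bdry L (S \<union> T) = Sigma T (\<lambda>x. nb L x - S)"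
  proof
    show "edge_bdry L (S \<union> T) \<subseteq> Sigma T (\<lambda>x. nb L x - S)"
    proof
      fix e assume "e \<in> edge_bdry L (S \<union> T)"
      then obtain x y where e: "e = (x, y)" and x: "x \<in> S \<union> T" and y: "y \<in> obdry L (S \<union> T)"
        and a: "adj L x y" unfolding edge_bdry_def by auto
      have xs: "x \<in> sites L" using x S Tsites by auto
      have ynb: "y \<in> nb L x" using adj_nb[OF xs L(2)] a by simp
      have yn: "y \<notin> S" "y \<notin> T" using y unfolding obdry_def by auto
      have "x \<notin> S" using ynb yn Teq by auto
      then show "e \<in> Sigma T (\<lambda>x. nb L x - S)" using e x ynb yn by auto
    qed
  next
    show "Sigma T (\<lambda>x. nb L x - S) \<subseteq> edge_bdry L (S \<union> T)"
    proof
      fix e assume "e \<in> Sigma T (\<lambda>x. nb L x - S)"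
      then obtain x y where e: "e = (x, y)" and x: "x \<in> T" and y: "y \<in> nb L x" "y \<notin> S" by auto
      have xs: "x \<in> sites L" using x Tsites by auto
      have a: "adj L x y" using adj_nb[OF xs L(2)] y by simp
      have "even_site y = p" using nb_par[OF L(1) y(1)] Tpar[OF x] by simp
      then have "y \<notin> T" using Tpar[of y] by blast
      moreover have "y \<in> sites L" using y nb_sites[OF L0] by blast
      ultimately have "y \<in> obdry L (S \<union> T)" unfolding obdry_def using x y a by auto
      then show "e \<in> edge_bdry L (S \<union> T)" unfolding edge_bdry_def using e x a by auto
    qed
  qed
  have fnb: "finite (nb L x)" for x unfolding nb_def by simp
  have c1: "perimeter L (S \<union> T) = (\<Sum>x\<in>T. card (nb L x - S))"
    unfolding perimeter_def E using fT fnb by (simp add: card_SigmaI)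
  have c2: "card (nb L x - S) + card (nb L x \<inter> S) = 4" if "x \<in> T" for x
  proof -
    have "card (nb L x) = 4" using card_nb[of x L] that Tsites L by auto
    moreover have "card (nb L x) = card (nb L x - S) + card (nb L x \<inter> S)"
      using fnb[of x] by (metis Diff_Diff_Int Int_commute card_Diff_subset_Int card_mono Diff_subset Int_lower1
          finite_Int le_add_diff_inverse2 card_Diff_subset inf.cobounded1 finite_subset)
    ultimately show ?thesis by simp
  qed
  have sw: "Sigma T (\<lambda>x. nb L x \<inter> S) = (\<lambda>(y, x). (x, y)) ` Sigma S (nb L)"
  proof
    show "Sigma T (\<lambda>x. nb L x \<inter> S) \<subseteq> (\<lambda>(y, x). (x, y)) ` Sigma S (nb L)"
    proof
      fix e assume "e \<in> Sigma T (\<lambda>x. nb L x \<inter> S)"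
      then obtain x y where e: "e = (x, y)" and x: "x \<in> T" and y: "y \<in> nb L x" "y \<in> S" by auto
      have "x \<in> nb L y" using nb_sym[of x L y] x y Tsites L by auto
      then show "e \<in> (\<lambda>(y, x). (x, y)) ` Sigma S (nb L)" using e y by force
    qed
  next
    show "(\<lambda>(y, x). (x, y)) ` Sigma S (nb L) \<subseteq> Sigma T (\<lambda>x. nb L x \<inter> S)"
    proof
      fix e assume "e \<in> (\<lambda>(y, x). (x, y)) ` Sigma S (nb L)"
      then obtain x y where e: "e = (x, y)" and y: "y \<in> S" and x: "x \<in> nb L y" by auto
      have "y \<in> nb L x" using nb_sym[of y L x] x y S L by auto
      moreover have "x \<in> T" using Teq x y by auto
      ultimately show "e \<in> Sigma T (\<lambda>x. nb L x \<inter> S)" using e y by auto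
    qed
  qed
  have c3: "(\<Sum>x\<in>T. card (nb L x \<inter> S)) = 4 * card S"
  proof -
    have "(\<Sum>x\<in>T. card (nb L x \<inter> S)) = card (Sigma T (\<lambda>x. nb L x \<inter> S))"
      using fT fnb by (simp add: card_SigmaI)
    also have "\<dots> = card (Sigma S (nb L))"
      unfolding sw by (rule card_image) (auto simp: inj_on_def)
    also have "\<dots> = (\<Sum>y\<in>S. card (nb L y))"
      using fS fnb by (simp add: card_SigmaI)
    also have "\<dots> = (\<Sum>y\<in>S. 4)"
      using card_nb S L by (intro sum.cong) auto
    finally show ?thesis by simp
  qed
  have "perimeter L (S \<union> T) + 4 * card S = (\<Sum>x\<in>T. card (nb L x - S) + card (nb L x \<inter> S))"
    unfolding c1 c3[symmetric] sum.distrib by simp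
  also have "\<dots> = (\<Sum>x\<in>T. 4)" using c2 by (intro sum.cong) auto
  finally show ?thesis unfolding T_def by simp
qed

definition ph :: "nat \<Rightarrow> site \<Rightarrow> int \<times> int \<Rightarrow> site" where
  "ph L \<eta> kj = wrap L (fst \<eta> + (fst kj + snd kj), snd \<eta> + (fst kj - snd kj))"

definition bx :: "int \<Rightarrow> int \<Rightarrow> (int \<times> int) set" where
  "bx m n = {0..<m} \<times> {0..<n}"

lemma mod_add_left_eq_iff: "((a::int) + x) mod L = (a + y) mod L \<longleftrightarrow> L dvd (x - y)"
  by (simp add: mod_eq_dvd_iff)

lemma ph_eq: "ph L \<eta> (k, j) = ph L \<eta> (k', j') \<longleftrightarrow>
    int L dvd (k + j - (k' + j')) \<and> int L dvd (k - j - (k' - j'))"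
  unfolding ph_def wrap_def by (simp add: mod_add_left_eq_iff)

lemma dvd_small0: "(L::int) dvd x \<Longrightarrow> \<bar>x\<bar> < L \<Longrightarrow> x = 0"
proof (rule ccontr)
  assume "L dvd x" "\<bar>x\<bar> < L" "x \<noteq> 0"
  then have "\<bar>L\<bar> \<le> \<bar>x\<bar>" using dvd_imp_le_int by blast
  then show False using \<open>\<bar>x\<bar> < L\<close> by linarith
qed

lemma abs2_lt: "0 \<le> (a::int) \<Longrightarrow> a < h \<Longrightarrow> 0 \<le> b \<Longrightarrow> b < h \<Longrightarrow> L = 2 * h \<Longrightarrow> \<bar>2 * (a - b)\<bar> < L"
  by (simp add: abs_less_iff)

lemma ph_inj_D:
  assumes "even L" "L > 0"
  shows "inj_on (ph L \<eta>) ({0..<int L} \<times> {0..<int L div 2})"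
proof (rule inj_onI)
  fix p q assume p: "p \<in> {0..<int L} \<times> {0..<int L div 2}" and q: "q \<in> {0..<int L} \<times> {0..<int L div 2}"
    and e: "ph L \<eta> p = ph L \<eta> q"
  obtain k j where pk: "p = (k, j)" by (cases p)
  obtain k' j' where qk: "q = (k', j')" by (cases q)
  have hL: "int L = 2 * (int L div 2)" using assms by auto
  have d1: "int L dvd (k + j - (k' + j'))" and d2: "int L dvd (k - j - (k' - j'))"
    using e unfolding pk qk ph_eq by auto
  have "int L dvd (k + j - (k' + j')) - (k - j - (k' - j'))" using d1 d2 by (rule dvd_diff)
  moreover have "(k + j - (k' + j')) - (k - j - (k' - j')) = 2 * (j - j')" by simp
  ultimately have "int L dvd 2 * (j - j')" by simp
  moreover have "\<bar>2 * (j - j')\<bar> < int L"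
  proof -
    have "0 \<le> j" "j < int L div 2" "0 \<le> j'" "j' < int L div 2" using p q unfolding pk qk by auto
    then show ?thesis using hL abs2_lt by blast
  qed
  ultimately have "2 * (j - j') = 0" by (rule dvd_small0)
  then have jj: "j = j'" by simp
  then have "int L dvd (k - k')" using d1 by simp
  moreover have "\<bar>k - k'\<bar> < int L"
  proof -
    have "0 \<le> k" "k < int L" "0 \<le> k'" "k' < int L" using p q unfolding pk qk by auto
    then show ?thesis by linarith
  qed
  ultimately have "k - k' = 0" by (rule dvd_small0)
  then have "k = k'" by simp
  then show "p = q" using jj pk qk by simp
qed

lemma ph_inj_D':
  assumes "even L" "L > 0"
  shows "inj_on (ph L \<eta>) ({0..<int L div 2} \<times> {0..<int L})"
proof (rule inj_onI)
  fix p q assume p: "p \<in> {0..<int L div 2} \<times> {0..<int L}" and q: "q \<in> {0..<int L div 2} \<times> {0..<int L}"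
    and e: "ph L \<eta> p = ph L \<eta> q"
  obtain k j where pk: "p = (k, j)" by (cases p)
  obtain k' j' where qk: "q = (k', j')" by (cases q)
  have hL: "int L = 2 * (int L div 2)" using assms by auto
  have d1: "int L dvd (k + j - (k' + j'))" and d2: "int L dvd (k - j - (k' - j'))"
    using e unfolding pk qk ph_eq by auto
  have "int L dvd (k + j - (k' + j')) + (k - j - (k' - j'))" using d1 d2 by (rule dvd_add)
  moreover have "(k + j - (k' + j')) + (k - j - (k' - j')) = 2 * (k - k')" by simp
  ultimately have "int L dvd 2 * (k - k')" by simp
  moreover have "\<bar>2 * (k - k')\<bar> < int L"
  proof -
    have "0 \<le> k" "k < int L div 2" "0 \<le> k'" "k' < int L div 2" using p q unfolding pk qk by auto
    then show ?thesis using hL abs2_lt by blast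
  qed
  ultimately have "2 * (k - k') = 0" by (rule dvd_small0)
  then have kk: "k = k'" by simp
  then have "int L dvd (j' - j)" using d1 by (simp add: dvd_diff_commute)
  moreover have "\<bar>j' - j\<bar> < int L"
  proof -
    have "0 \<le> j" "j < int L" "0 \<le> j'" "j' < int L" using p q unfolding pk qk by auto
    then show ?thesis by linarith
  qed
  ultimately have "j' - j = 0" by (rule dvd_small0)
  then have "j = j'" by simp
  then show "p = q" using kk pk qk by simp
qed

lemma card_bx: "0 \<le> m \<Longrightarrow> 0 \<le> n \<Longrightarrow> card (bx m n) = nat m * nat n"
  unfolding bx_def by (simp add: card_cartesian_product)

lemma N1:
  assumes "even L" "L > 0" "0 \<le> m" "m \<le> int L" "0 \<le> n" "n \<le> int L div 2"
  shows "card (ph L \<eta> ` bx m n) = nat m * nat n"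
proof -
  have "inj_on (ph L \<eta>) (bx m n)"
    by (rule inj_on_subset[OF ph_inj_D[OF assms(1,2)]]) (use assms in \<open>auto simp: bx_def\<close>)
  then have "card (ph L \<eta> ` bx m n) = card (bx m n)" by (rule card_image)
  also have "\<dots> = nat m * nat n" using card_bx assms by blast
  finally show ?thesis .
qed

lemma N1':
  assumes "even L" "L > 0" "0 \<le> m" "m \<le> int L div 2" "0 \<le> n" "n \<le> int L"
  shows "card (ph L \<eta> ` bx m n) = nat m * nat n"
proof -
  have "inj_on (ph L \<eta>) (bx m n)"
    by (rule inj_on_subset[OF ph_inj_D'[OF assms(1,2)]]) (use assms in \<open>auto simp: bx_def\<close>)
  then have "card (ph L \<eta> ` bx m n) = card (bx m n)" by (rule card_image)
  also have "\<dots> = nat m * nat n" using card_bx assms by blast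
  finally show ?thesis .
qed

lemma N2a:
  assumes "0 \<le> n" "L > 0"
  shows "ph L \<eta> ` bx (int L + 1) n = ph L \<eta> ` bx (int L) n"
proof
  show "ph L \<eta> ` bx (int L) n \<subseteq> ph L \<eta> ` bx (int L + 1) n" unfolding bx_def by auto
next
  show "ph L \<eta> ` bx (int L + 1) n \<subseteq> ph L \<eta> ` bx (int L) n"
  proof
    fix z assume "z \<in> ph L \<eta> ` bx (int L + 1) n"
    then obtain k j where z: "z = ph L \<eta> (k, j)" and kj: "0 \<le> k" "k \<le> int L" "0 \<le> j" "j < n"
      unfolding bx_def by auto
    show "z \<in> ph L \<eta> ` bx (int L) n"
    proof (cases "k = int L")
      case True
      have "ph L \<eta> (k, j) = ph L \<eta> (0, j)" unfolding ph_eq True by simp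
      moreover have "(0, j) \<in> bx (int L) n" using kj True assms unfolding bx_def by auto
      ultimately show ?thesis using z by blast
    next
      case False
      then have "(k, j) \<in> bx (int L) n" using kj unfolding bx_def by auto
      then show ?thesis using z by blast
    qed
  qed
qed

lemma N2b:
  assumes "0 \<le> m" "L > 0"
  shows "ph L \<eta> ` bx m (int L + 1) = ph L \<eta> ` bx m (int L)"
proof
  show "ph L \<eta> ` bx m (int L) \<subseteq> ph L \<eta> ` bx m (int L + 1)" unfolding bx_def by auto
next
  show "ph L \<eta> ` bx m (int L + 1) \<subseteq> ph L \<eta> ` bx m (int L)"
  proof
    fix z assume "z \<in> ph L \<eta> ` bx m (int L + 1)"
    then obtain k j where z: "z = ph L \<eta> (k, j)" and kj: "0 \<le> k" "k < m" "0 \<le> j" "j \<le> int L"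
      unfolding bx_def by auto
    show "z \<in> ph L \<eta> ` bx m (int L)"
    proof (cases "j = int L")
      case True
      have "ph L \<eta> (k, j) = ph L \<eta> (k, 0)" unfolding ph_eq True by simp
      moreover have "(k, 0) \<in> bx m (int L)" using kj True assms unfolding bx_def by auto
      ultimately show ?thesis using z by blast
    next
      case False
      then have "(k, j) \<in> bx m (int L)" using kj unfolding bx_def by auto
      then show ?thesis using z by blast
    qed
  qed
qed

lemma ph_shift1:
  assumes "int L = 2 * h" "k' = k + h" "j' = j + h"
  shows "ph L \<eta> (k', j') = ph L \<eta> (k, j)"
proof -
  have "k + h + (j + h) - (k + j) = int L" using assms(1) by simp
  moreover have "k + h - (j + h) - (k - j) = 0" by simp
  ultimately show ?thesis unfolding ph_eq assms(2,3) by (metis dvd_0_right dvd_refl)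
qed

lemma ph_shift2:
  assumes "int L = 2 * h" "k' = k + h" "j' = j - h"
  shows "ph L \<eta> (k', j') = ph L \<eta> (k, j)"
proof -
  have "k + h + (j - h) - (k + j) = 0" by simp
  moreover have "k + h - (j - h) - (k - j) = int L" using assms(1) by simp
  ultimately show ?thesis unfolding ph_eq assms(2,3) by (metis dvd_0_right dvd_refl)
qed

lemma N3:
  assumes "even L" "L > 0" "h = int L div 2" "h \<le> m" "m \<le> int L" "h \<le> n" "n \<le> int L"
  shows "int (card (ph L \<eta> ` bx m n)) = int L * (n - h) + m * (int L - n)"
proof -
  have hL: "int L = 2 * h" using assms(1,3) by auto
  have h0: "0 \<le> h" using assms(3) by simp
  define A1 where "A1 = {0..<int L} \<times> {0..<n - h}"
  define A2 where "A2 = {0..<m} \<times> {n - h..<h}"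
  have eq: "ph L \<eta> ` bx m n = ph L \<eta> ` (A1 \<union> A2)"
  proof
    show "ph L \<eta> ` bx m n \<subseteq> ph L \<eta> ` (A1 \<union> A2)"
    proof
      fix z assume "z \<in> ph L \<eta> ` bx m n"
      then obtain k j where z: "z = ph L \<eta> (k, j)" and kj: "0 \<le> k" "k < m" "0 \<le> j" "j < n"
        unfolding bx_def by auto
      show "z \<in> ph L \<eta> ` (A1 \<union> A2)"
      proof (cases "j < h")
        case True
        then have "(k, j) \<in> A1 \<union> A2" using kj assms(5) unfolding A1_def A2_def by auto
        then show ?thesis using z by blast
      next
        case jh: False
        show ?thesis
        proof (cases "h \<le> k")
          case True
          have "ph L \<eta> (k, j) = ph L \<eta> (k - h, j - h)" by (rule ph_shift1[OF hL]) auto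
          moreover have "(k - h, j - h) \<in> A1" using kj jh True hL assms(5) unfolding A1_def by auto
          ultimately show ?thesis using z by blast
        next
          case False
          have "ph L \<eta> (k + h, j - h) = ph L \<eta> (k, j)" by (rule ph_shift2[OF hL]) auto
          moreover have "(k + h, j - h) \<in> A1" using kj jh False hL unfolding A1_def by auto
          ultimately show ?thesis using z by (metis UnI1 image_eqI)
        qed
      qed
    qed
  next
    show "ph L \<eta> ` (A1 \<union> A2) \<subseteq> ph L \<eta> ` bx m n"
    proof
      fix z assume "z \<in> ph L \<eta> ` (A1 \<union> A2)"
      then obtain k j where z: "z = ph L \<eta> (k, j)" and kj: "(k, j) \<in> A1 \<union> A2" by auto
      show "z \<in> ph L \<eta> ` bx m n"
      proof (cases "k < m")
        case True
        have "0 \<le> k" "0 \<le> j" "j < h" using kj hL assms(6,7) unfolding A1_def A2_def by auto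
        then have "(k, j) \<in> bx m n" using True assms(6) unfolding bx_def by auto
        then show ?thesis using z by blast
      next
        case False
        then have kj1: "0 \<le> k" "k < int L" "0 \<le> j" "j < n - h" using kj unfolding A1_def A2_def by auto
        have "ph L \<eta> (k, j) = ph L \<eta> (k - h, j + h)" by (rule ph_shift2[OF hL]) auto
        moreover have "(k - h, j + h) \<in> bx m n" using kj1 False assms(4) hL unfolding bx_def by auto
        ultimately show ?thesis using z by blast
      qed
    qed
  qed
  have inj: "inj_on (ph L \<eta>) (A1 \<union> A2)"
    by (rule inj_on_subset[OF ph_inj_D[OF assms(1,2)]])
       (use assms(3,4,5,6,7) hL in \<open>auto simp: A1_def A2_def\<close>)
  have disj: "A1 \<inter> A2 = {}" unfolding A1_def A2_def by auto
  have cA1: "card A1 = nat (int L) * nat (n - h)" unfolding A1_def by (simp add: card_cartesian_product)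
  have cA2: "card A2 = nat m * nat (h - (n - h))" unfolding A2_def by (simp add: card_cartesian_product)
  have "card (ph L \<eta> ` bx m n) = card A1 + card A2"
    unfolding eq card_image[OF inj] by (rule card_Un_disjoint) (auto simp: A1_def A2_def disj)
  then have "int (card (ph L \<eta> ` bx m n)) = int L * (n - h) + m * (h - (n - h))"
    unfolding cA1 cA2 using assms(4,6,7) h0 hL by simp
  then show ?thesis using hL by (simp add: algebra_simps)
qed

lemma obdry_eq:
  assumes L: "even L" "L \<ge> 3" and S: "S \<subseteq> sites L" and par: "\<forall>x\<in>S. even_site x = p"
  shows "obdry L S = (\<Union>x\<in>S. nb L x)"
proof -
  have L0: "L > 0" using L by simp
  have nbS: "y \<notin> S" if "x \<in> S" "y \<in> nb L x" for x y
    using nb_par[OF L(1) that(2)] par that by auto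
  show ?thesis
  proof
    show "obdry L S \<subseteq> (\<Union>x\<in>S. nb L x)"
    proof
      fix y assume "y \<in> obdry L S"
      then obtain x where "x \<in> S" "adj L x y" unfolding obdry_def by auto
      then show "y \<in> (\<Union>x\<in>S. nb L x)" using adj_nb[of x L y] S L by auto
    qed
  next
    show "(\<Union>x\<in>S. nb L x) \<subseteq> obdry L S"
    proof
      fix y assume "y \<in> (\<Union>x\<in>S. nb L x)"
      then obtain x where x: "x \<in> S" "y \<in> nb L x" by auto
      then have "adj L x y" using adj_nb[of x L y] S L by auto
      moreover have "y \<in> sites L" using x nb_sites[OF L0] by blast
      ultimately show "y \<in> obdry L S" unfolding obdry_def using x nbS by auto
    qed
  qed
qed

lemma perim_mono:
  assumes L: "even L" "L \<ge> 3" and S: "S \<subseteq> sites L" and par: "\<forall>x\<in>S. even_site x = p"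
  shows "perimeter L S = 4 * card S"
proof -
  have L0: "L > 0" using L by simp
  have fS: "finite S" using S finite_sites finite_subset by blast
  have nbS: "y \<notin> S" if "x \<in> S" "y \<in> nb L x" for x y
    using nb_par[OF L(1) that(2)] par that by auto
  have E: "edge_bdry L S = Sigma S (nb L)"
  proof
    show "edge_bdry L S \<subseteq> Sigma S (nb L)"
    proof
      fix e assume "e \<in> edge_bdry L S"
      then obtain x y where e: "e = (x, y)" and x: "x \<in> S" and a: "adj L x y"
        unfolding edge_bdry_def by auto
      have "y \<in> nb L x" using adj_nb[of x L y] x S L a by auto
      then show "e \<in> Sigma S (nb L)" using e x by auto
    qed
  next
    show "Sigma S (nb L) \<subseteq> edge_bdry L S"
    proof
      fix e assume "e \<in> Sigma S (nb L)"
      then obtain x y where e: "e = (x, y)" and x: "x \<in> S" and y: "y \<in> nb L x" by auto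
      have a: "adj L x y" using adj_nb[of x L y] x S L y by auto
      have "y \<in> sites L" using y nb_sites[OF L0] by blast
      then have "y \<in> obdry L S" unfolding obdry_def using x y a nbS by auto
      then show "e \<in> edge_bdry L S" unfolding edge_bdry_def using e x a by auto
    qed
  qed
  have fnb: "finite (nb L x)" for x unfolding nb_def by simp
  have "perimeter L S = (\<Sum>x\<in>S. card (nb L x))"
    unfolding perimeter_def E using fS fnb by (simp add: card_SigmaI)
  also have "\<dots> = (\<Sum>x\<in>S. 4)" using card_nb S L by (intro sum.cong) auto
  finally show ?thesis by simp
qed

lemma wrap_shift: "wrap L (fst (wrap L p) + c, snd (wrap L p) + d) = wrap L (fst p + c, snd p + d)"
  unfolding wrap_def by (simp add: mod_add_left_eq)

lemma ph_par:
  assumes "even L"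
  shows "even_site (ph L \<eta> kj) = even_site \<eta>"
proof -
  have "even_site (ph L \<eta> kj) = even_site (fst \<eta> + (fst kj + snd kj), snd \<eta> + (fst kj - snd kj))"
    unfolding ph_def by (rule wrap_par[OF assms])
  moreover have "fst \<eta> + (fst kj + snd kj) + (snd \<eta> + (fst kj - snd kj)) = (fst \<eta> + snd \<eta>) + 2 * fst kj"
    by simp
  ultimately show ?thesis unfolding even_site_def by simp
qed

lemma ph_sites: "L > 0 \<Longrightarrow> ph L \<eta> kj \<in> sites L"
  unfolding ph_def by (rule wrap_sites)

lemma nb_ph:
  "nb L (ph L \<eta> (k, j)) = {ph L (fst \<eta> - 1, snd \<eta>) (k+1, j+1), ph L (fst \<eta> - 1, snd \<eta>) (k, j),
      ph L (fst \<eta> - 1, snd \<eta>) (k+1, j), ph L (fst \<eta> - 1, snd \<eta>) (k, j+1)}"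
proof -
  have a: "nb L (ph L \<eta> (k, j)) = {wrap L (fst \<eta> + (k + j) + 1, snd \<eta> + (k - j)),
     wrap L (fst \<eta> + (k + j) - 1, snd \<eta> + (k - j)), wrap L (fst \<eta> + (k + j), snd \<eta> + (k - j) + 1),
     wrap L (fst \<eta> + (k + j), snd \<eta> + (k - j) - 1)}"
    unfolding nb_def ph_def using wrap_shift[of L "(fst \<eta> + (k + j), snd \<eta> + (k - j))"]
    by (simp add: wrap_shift[where d=0, simplified] wrap_shift[where c=0, simplified] diff_conv_add_uminus
        del: add_uminus_conv_diff)
  show ?thesis unfolding a unfolding ph_def fst_conv snd_conv
    by (simp add: algebra_simps insert_commute)
qed

lemma S_eq: "{wrap L (fst \<eta> + int k + int j, snd \<eta> + int k - int j) | k j. k < l1 \<and> j < l2}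
   = ph L \<eta> ` bx (int l1) (int l2)"
proof
  show "{wrap L (fst \<eta> + int k + int j, snd \<eta> + int k - int j) | k j. k < l1 \<and> j < l2}
     \<subseteq> ph L \<eta> ` bx (int l1) (int l2)"
  proof
    fix z assume "z \<in> {wrap L (fst \<eta> + int k + int j, snd \<eta> + int k - int j) | k j. k < l1 \<and> j < l2}"
    then obtain k j where z: "z = wrap L (fst \<eta> + int k + int j, snd \<eta> + int k - int j)" "k < l1" "j < l2"
      by blast
    have "z = ph L \<eta> (int k, int j)" unfolding z ph_def by (simp add: algebra_simps)
    moreover have "(int k, int j) \<in> bx (int l1) (int l2)" using z unfolding bx_def by auto
    ultimately show "z \<in> ph L \<eta> ` bx (int l1) (int l2)" by blast
  qed
next
  show "ph L \<eta> ` bx (int l1) (int l2) \<subseteq>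
     {wrap L (fst \<eta> + int k + int j, snd \<eta> + int k - int j) | k j. k < l1 \<and> j < l2}"
  proof
    fix z assume "z \<in> ph L \<eta> ` bx (int l1) (int l2)"
    then obtain a b where z: "z = ph L \<eta> (a, b)" and ab: "0 \<le> a" "a < int l1" "0 \<le> b" "b < int l2"
      unfolding bx_def by auto
    have "z = wrap L (fst \<eta> + int (nat a) + int (nat b), snd \<eta> + int (nat a) - int (nat b))"
      unfolding z ph_def using ab by (simp add: algebra_simps)
    moreover have "nat a < l1" "nat b < l2" using ab by auto
    ultimately show "z \<in> {wrap L (fst \<eta> + int k + int j, snd \<eta> + int k - int j) | k j. k < l1 \<and> j < l2}"
      by blast
  qed
qed

lemma D00: "{wrap L \<eta>} = ph L \<eta> ` bx 1 1"
proof -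
  have "bx 1 1 = {(0, 0)}" unfolding bx_def by auto
  then show ?thesis unfolding ph_def by simp
qed

lemma D0: "{wrap L (fst \<eta> + int j, snd \<eta> - int j) | j. j \<le> l2} = ph L \<eta> ` bx 1 (int l2 + 1)"
proof
  show "{wrap L (fst \<eta> + int j, snd \<eta> - int j) | j. j \<le> l2} \<subseteq> ph L \<eta> ` bx 1 (int l2 + 1)"
  proof
    fix z assume "z \<in> {wrap L (fst \<eta> + int j, snd \<eta> - int j) | j. j \<le> l2}"
    then obtain j where z: "z = wrap L (fst \<eta> + int j, snd \<eta> - int j)" "j \<le> l2" by blast
    have "z = ph L \<eta> (0, int j)" unfolding z ph_def by simp
    moreover have "(0, int j) \<in> bx 1 (int l2 + 1)" using z unfolding bx_def by auto
    ultimately show "z \<in> ph L \<eta> ` bx 1 (int l2 + 1)" by blast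
  qed
next
  show "ph L \<eta> ` bx 1 (int l2 + 1) \<subseteq> {wrap L (fst \<eta> + int j, snd \<eta> - int j) | j. j \<le> l2}"
  proof
    fix z assume "z \<in> ph L \<eta> ` bx 1 (int l2 + 1)"
    then obtain a b where z: "z = ph L \<eta> (a, b)" and ab: "0 \<le> a" "a < 1" "0 \<le> b" "b < int l2 + 1"
      unfolding bx_def by auto
    have a0: "a = 0" using ab by simp
    have "z = wrap L (fst \<eta> + int (nat b), snd \<eta> - int (nat b))"
      unfolding z ph_def a0 using ab by simp
    moreover have "nat b \<le> l2" using ab by auto
    ultimately show "z \<in> {wrap L (fst \<eta> + int j, snd \<eta> - int j) | j. j \<le> l2}" by blast
  qed
qed

lemma D0': "{wrap L (fst \<eta> + int k, snd \<eta> + int k) | k. k \<le> l1} = ph L \<eta> ` bx (int l1 + 1) 1"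
proof
  show "{wrap L (fst \<eta> + int k, snd \<eta> + int k) | k. k \<le> l1} \<subseteq> ph L \<eta> ` bx (int l1 + 1) 1"
  proof
    fix z assume "z \<in> {wrap L (fst \<eta> + int k, snd \<eta> + int k) | k. k \<le> l1}"
    then obtain k where z: "z = wrap L (fst \<eta> + int k, snd \<eta> + int k)" "k \<le> l1" by blast
    have "z = ph L \<eta> (int k, 0)" unfolding z ph_def by simp
    moreover have "(int k, 0) \<in> bx (int l1 + 1) 1" using z unfolding bx_def by auto
    ultimately show "z \<in> ph L \<eta> ` bx (int l1 + 1) 1" by blast
  qed
next
  show "ph L \<eta> ` bx (int l1 + 1) 1 \<subseteq> {wrap L (fst \<eta> + int k, snd \<eta> + int k) | k. k \<le> l1}"
  proof
    fix z assume "z \<in> ph L \<eta> ` bx (int l1 + 1) 1"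
    then obtain a b where z: "z = ph L \<eta> (a, b)" and ab: "0 \<le> a" "a < int l1 + 1" "0 \<le> b" "b < 1"
      unfolding bx_def by auto
    have b0: "b = 0" using ab by simp
    have "z = wrap L (fst \<eta> + int (nat a), snd \<eta> + int (nat a))"
      unfolding z ph_def b0 using ab by simp
    moreover have "nat a \<le> l1" using ab by auto
    ultimately show "z \<in> {wrap L (fst \<eta> + int k, snd \<eta> + int k) | k. k \<le> l1}" by blast
  qed
qed

lemma bd_eq:
  assumes L: "even L" "L \<ge> 3" and m: "1 \<le> m" and n: "1 \<le> n"
  shows "obdry L (ph L \<eta> ` bx m n) = ph L (fst \<eta> - 1, snd \<eta>) ` bx (m + 1) (n + 1)"
proof -
  let ?e = "(fst \<eta> - 1, snd \<eta>)"
  have L0: "L > 0" using L by simp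
  have "obdry L (ph L \<eta> ` bx m n) = (\<Union>x\<in>ph L \<eta> ` bx m n. nb L x)"
    by (rule obdry_eq[OF L, where p = "even_site \<eta>"]) (auto simp: ph_sites[OF L0] ph_par[OF L(1)])
  also have "\<dots> = ph L ?e ` bx (m + 1) (n + 1)"
  proof
    show "(\<Union>x\<in>ph L \<eta> ` bx m n. nb L x) \<subseteq> ph L ?e ` bx (m + 1) (n + 1)"
    proof
      fix y assume "y \<in> (\<Union>x\<in>ph L \<eta> ` bx m n. nb L x)"
      then obtain k j where kj: "(k, j) \<in> bx m n" and y: "y \<in> nb L (ph L \<eta> (k, j))" by auto
      have r: "0 \<le> k" "k < m" "0 \<le> j" "j < n" using kj unfolding bx_def by auto
      have "{(k+1, j+1), (k, j), (k+1, j), (k, j+1)} \<subseteq> bx (m + 1) (n + 1)"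
        using r unfolding bx_def by auto
      then show "y \<in> ph L ?e ` bx (m + 1) (n + 1)" using y unfolding nb_ph by blast
    qed
  next
    show "ph L ?e ` bx (m + 1) (n + 1) \<subseteq> (\<Union>x\<in>ph L \<eta> ` bx m n. nb L x)"
    proof
      fix y assume "y \<in> ph L ?e ` bx (m + 1) (n + 1)"
      then obtain p q where y: "y = ph L ?e (p, q)" and r: "0 \<le> p" "p \<le> m" "0 \<le> q" "q \<le> n"
        unfolding bx_def by auto
      define k where "k = (if p < m then p else p - 1)"
      define j where "j = (if q < n then q else q - 1)"
      have kj: "(k, j) \<in> bx m n" using r m n unfolding k_def j_def bx_def by auto
      have "(p, q) \<in> {(k+1, j+1), (k, j), (k+1, j), (k, j+1)}"
        unfolding k_def j_def using r by auto
      then have "y \<in> nb L (ph L \<eta> (k, j))" unfolding nb_ph y by auto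
      then show "y \<in> (\<Union>x\<in>ph L \<eta> ` bx m n. nb L x)" using kj by blast
    qed
  qed
  finally show ?thesis .
qed

lemma N1n:
  assumes "even L" "L > 0" "m \<le> L" "n \<le> L div 2"
  shows "card (ph L \<eta> ` bx (int m) (int n)) = m * n"
  using N1[OF assms(1,2), of "int m" "int n" \<eta>] assms by simp

lemma N1n':
  assumes "even L" "L > 0" "m \<le> L div 2" "n \<le> L"
  shows "card (ph L \<eta> ` bx (int m) (int n)) = m * n"
  using N1'[OF assms(1,2), of "int m" "int n" \<eta>] assms by simp

lemma N3n:
  assumes "even L" "L > 0" "L div 2 \<le> m" "m \<le> L" "L div 2 \<le> n" "n \<le> L"
  shows "int (card (ph L \<eta> ` bx (int m) (int n))) = int L * (int n - int (L div 2)) + int m * (int L - int n)"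
  using N3[OF assms(1,2), of "int (L div 2)" "int m" "int n" \<eta>] assms by (simp add: zdiv_int)

lemma N2an: "L > 0 \<Longrightarrow> ph L \<eta> ` bx (int (L + 1)) (int n) = ph L \<eta> ` bx (int L) (int n)"
  using N2a[of "int n" L \<eta>] by (simp add: add.commute)

lemma N2bn: "L > 0 \<Longrightarrow> ph L \<eta> ` bx (int m) (int (L + 1)) = ph L \<eta> ` bx (int m) (int L)"
  using N2b[of "int m" L \<eta>] by (simp add: add.commute)

theorem proposition3p3:
  fixes L l1 l2 :: nat and \<eta> :: site
  assumes "even L" and "L \<ge> 6" and "l1 \<le> L" and "l2 \<le> L"
    and "\<eta> \<in> sites L"
    and "l1 * l2 \<noteq> 0 \<Longrightarrow> odd_site \<eta>"
    and "l1 * l2 = 0 \<Longrightarrow> even_site \<eta>"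
  shows "perimeter L (rhombus L l1 l2 \<eta>) = 4 *
    (if min l1 l2 < L div 2 \<and> max l1 l2 < L then l1 + l2 + 1
     else if min l1 l2 \<ge> L div 2 \<and> max l1 l2 < L then 2 * L - (l1 + l2 + 1)
     else if min l1 l2 < L div 2 \<and> max l1 l2 = L then L
     else 0)" (is "_ = 4 * ?rhs")
proof -
  have ev: "even L" using assms(1) .
  have L3: "L \<ge> 3" and L0: "L > 0" using assms(2) by auto
  define H where "H = L div 2"
  have LH: "L = 2 * H" using ev unfolding H_def by auto
  have H3: "H \<ge> 3" using assms(2) LH by simp
  let ?e' = "(fst \<eta> - 1, snd \<eta>)"
  show ?thesis
  proof (cases "l1 = 0 \<or> l2 = 0")
    case True
    define R where "R = ph L \<eta> ` bx (int l1 + 1) (int l2 + 1)"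
    have Req: "rhombus L l1 l2 \<eta> = R"
      unfolding rhombus_def R_def using True
      by (auto simp: D00 D0 D0')
    have RR: "R = ph L \<eta> ` bx (int (l1 + 1)) (int (l2 + 1))" unfolding R_def by (simp add: add.commute)
    have pR: "perimeter L R = 4 * card R"
      by (rule perim_mono[OF ev L3, where p = "even_site \<eta>"])
         (auto simp: R_def ph_sites[OF L0] ph_par[OF ev])
    have "card R = ?rhs"
    proof (cases "l1 = 0")
      case l10: True
      show ?thesis
      proof (cases "l2 < L")
        case True
        have "card R = 1 * (l2 + 1)" unfolding RR l10
          using N1n'[OF ev L0, of "0+1" "l2+1" \<eta>] True H3 LH by (simp add: H_def[symmetric])
        then show ?thesis using True l10 H3 LH by (simp add: H_def[symmetric])
      next
        case False
        then have l2L: "l2 = L" using assms(4) by simp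
        have "card R = 1 * L" unfolding RR l10 l2L N2bn[OF L0]
          using N1n'[OF ev L0, of "0+1" "L" \<eta>] H3 LH by (simp add: H_def[symmetric])
        then show ?thesis using l10 l2L H3 LH by (simp add: H_def[symmetric])
      qed
    next
      case l1n: False
      then have l20: "l2 = 0" using True by simp
      show ?thesis
      proof (cases "l1 < L")
        case True
        have "card R = (l1 + 1) * 1" unfolding RR l20
          using N1n[OF ev L0, of "l1+1" "0+1" \<eta>] True H3 LH by (simp add: H_def[symmetric])
        then show ?thesis using True l20 H3 LH by (simp add: H_def[symmetric])
      next
        case False
        then have l1L: "l1 = L" using assms(3) by simp
        have "card R = L * 1" unfolding RR l20 l1L N2an[OF L0]
          using N1n[OF ev L0, of "L" "0+1" \<eta>] H3 LH by (simp add: H_def[symmetric])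
        then show ?thesis using l20 l1L H3 LH by (simp add: H_def[symmetric])
      qed
    qed
    then show ?thesis using Req pR by simp
  next
    case False
    then have l11: "l1 \<ge> 1" and l21: "l2 \<ge> 1" by auto
    define S where "S = ph L \<eta> ` bx (int l1) (int l2)"
    define T where "T = ph L ?e' ` bx (int (l1 + 1)) (int (l2 + 1))"
    have Seq: "rhombus L l1 l2 \<eta> = S \<union> obdry L S"
      unfolding rhombus_def S_def using False by (simp add: S_eq Let_def)
    have Teq: "obdry L S = T"
      unfolding S_def T_def using bd_eq[OF ev L3, of "int l1" "int l2" \<eta>] l11 l21 by (simp add: add.commute)
    have P: "perimeter L (S \<union> T) + 4 * card S = 4 * card T"
      unfolding Teq[symmetric]
      by (rule perim_closure[OF ev L3, where p = "even_site \<eta>"])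
         (auto simp: S_def ph_sites[OF L0] ph_par[OF ev])
    have HH: "L div 2 = H" unfolding H_def ..
    have key: "card T = card S + ?rhs"
    proof (cases "min l1 l2 < H")
      case minH: True
      show ?thesis
      proof (cases "max l1 l2 < L")
        case mxL: True
        have "card S = l1 * l2 \<and> card T = (l1 + 1) * (l2 + 1)"
        proof (cases "l2 < H")
          case True
          have "card S = l1 * l2" unfolding S_def
            by (rule N1n[OF ev L0]) (use True mxL in \<open>auto simp: HH\<close>)
          moreover have "card T = (l1 + 1) * (l2 + 1)" unfolding T_def
            by (rule N1n[OF ev L0]) (use True mxL in \<open>auto simp: HH\<close>)
          ultimately show ?thesis by simp
        next
          case False
          then have "l1 < H" using minH by simp
          have "card S = l1 * l2" unfolding S_def
            by (rule N1n'[OF ev L0]) (use \<open>l1 < H\<close> mxL in \<open>auto simp: HH\<close>)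
          moreover have "card T = (l1 + 1) * (l2 + 1)" unfolding T_def
            by (rule N1n'[OF ev L0]) (use \<open>l1 < H\<close> mxL in \<open>auto simp: HH\<close>)
          ultimately show ?thesis by simp
        qed
        then show ?thesis using minH mxL by (simp add: HH)
      next
        case False
        then have mx: "max l1 l2 = L" using assms(3,4) by (auto simp: max_def)
        have "card S = L * min l1 l2 \<and> card T = L * (min l1 l2 + 1)"
        proof (cases "l1 = L")
          case True
          then have l2H: "l2 < H" using minH LH H3 by auto
          have "card S = L * l2" unfolding S_def True
            by (rule N1n[OF ev L0]) (use l2H in \<open>auto simp: HH\<close>)
          moreover have "card T = L * (l2 + 1)" unfolding T_def True N2an[OF L0]
            by (rule N1n[OF ev L0]) (use l2H in \<open>auto simp: HH\<close>)
          ultimately show ?thesis using True l2H LH by simp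
        next
          case False
          then have l2L: "l2 = L" and l1H: "l1 < H" using mx minH by auto
          have "card S = l1 * L" unfolding S_def l2L
            by (rule N1n'[OF ev L0]) (use l1H in \<open>auto simp: HH\<close>)
          moreover have "card T = (l1 + 1) * L" unfolding T_def l2L N2bn[OF L0]
            by (rule N1n'[OF ev L0]) (use l1H in \<open>auto simp: HH\<close>)
          ultimately show ?thesis using l2L l1H LH by simp
        qed
        then show ?thesis using minH mx by (simp add: HH)
      qed
    next
      case minH: False
      then have l1H: "H \<le> l1" and l2H: "H \<le> l2" by auto
      show ?thesis
      proof (cases "max l1 l2 < L")
        case True
        have a: "int (card S) = int L * (int l2 - int H) + int l1 * (int L - int l2)"
          unfolding S_def HH[symmetric] by (rule N3n[OF ev L0]) (use l1H l2H assms(3,4) in \<open>auto simp: HH\<close>)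
        have b: "int (card T) = int L * (int (l2 + 1) - int H) + int (l1 + 1) * (int L - int (l2 + 1))"
          unfolding T_def HH[symmetric] by (rule N3n[OF ev L0]) (use l1H l2H True in \<open>auto simp: HH\<close>)
        have "int (card T) = int (card S) + (2 * int L - (int l1 + int l2 + 1))"
          unfolding a b by (simp add: algebra_simps)
        then have "card T = card S + (2 * L - (l1 + l2 + 1))" using True by linarith
        then show ?thesis using l1H l2H True by (simp add: HH)
      next
        case False
        then have mx: "max l1 l2 = L" using assms(3,4) by (auto simp: max_def)
        have LHi: "int L = 2 * int H" using LH by simp
        have "int (card S) = int L * int H \<and> int (card T) = int L * int H"
        proof (cases "l1 = L")
          case True
          have a: "int (card S) = int L * (int l2 - int H) + int L * (int L - int l2)"
            unfolding S_def True HH[symmetric] by (rule N3n[OF ev L0]) (use l2H assms(4) in \<open>auto simp: HH\<close>)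
          have b: "int (card T) = int L * int H"
          proof (cases "l2 < L")
            case True
            have "int (card T) = int L * (int (l2 + 1) - int H) + int L * (int L - int (l2 + 1))"
              unfolding T_def \<open>l1 = L\<close> N2an[OF L0] HH[symmetric]
              by (rule N3n[OF ev L0]) (use l2H True in \<open>auto simp: HH\<close>)
            then show ?thesis using LHi by (simp add: algebra_simps)
          next
            case False
            then have "l2 = L" using assms(4) by simp
            have "int (card T) = int L * (int L - int H) + int L * (int L - int L)"
              unfolding T_def \<open>l1 = L\<close> \<open>l2 = L\<close> N2an[OF L0] N2bn[OF L0] HH[symmetric]
              by (rule N3n[OF ev L0]) (use LH in \<open>auto simp: HH\<close>)
            then show ?thesis using LHi by (simp add: algebra_simps)
          qed
          show ?thesis using a b LHi by (simp add: algebra_simps)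
        next
          case False
          then have l2L: "l2 = L" and l1L: "l1 < L" using mx assms(3) by auto
          have a: "int (card S) = int L * (int L - int H) + int l1 * (int L - int L)"
            unfolding S_def l2L HH[symmetric] by (rule N3n[OF ev L0]) (use l1H l1L LH in \<open>auto simp: HH\<close>)
          have b: "int (card T) = int L * (int L - int H) + int (l1 + 1) * (int L - int L)"
            unfolding T_def l2L N2bn[OF L0] HH[symmetric]
            by (rule N3n[OF ev L0]) (use l1H l1L LH in \<open>auto simp: HH\<close>)
          show ?thesis using a b LHi by (simp add: algebra_simps)
        qed
        then have "card T = card S" by simp
        then show ?thesis using minH mx by (simp add: HH)
      qed
    qed
    show ?thesis unfolding Seq Teq using P key by simp
  qed
qed

end
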